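(* Let $\mathbf k$ be a commutative domain of characteristic zero and let $\omega=xy-(\phi(x)+y\psi(x))$ with $\phi,\psi\in\mathbf k[x]$ both nonzero. Then there exists a commutative Rota-Baxter algebra $(R,P)$ of weight $0$ such that the $\omega$-cover $\widetilde P$ of $P$ on $R^{\mathbb N}$ (weight-$0$ Hurwitz product) is not a Rota-Baxter operator of weight $0$.
   Context: A Rota-Baxter operator of weight $0$ on an algebra $A$ is a $\mathbf{k}$-linear $P$ with $P(x)P(y)=P(P(x)y)+P(xP(y))$. $R^{\mathbb N}$ is the set of sequences $(f_n)_{n\in\mathbb N}$ in $R$ with product $(fg)_n=\sum_{j=0}^n\binom{n}{j}f_{n-j}g_j$, and $(\partial_R f)_n=f_{n+1}$. For $\phi=\sum_{i=0}^r a_ix^i$, $\psi=\sum_{j=0}^s b_jx^j$, the $\omega$-cover $\widetilde P$ of $P$ is the unique linear operator on $R^{\mathbb N}$ with $\widetilde P_0(f)=P(f_0)$ and $\widetilde P_n(f)=\sum_{i=0}^r a_if_{n-1+i}+\sum_{j=0}^s b_j\widetilde P_{n-1}(\partial_R^jf)$ for $n\ge1$, where $\widetilde P_n(f):=\widetilde P(f)_n$. *)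

theory Defs
  imports "HOL-Computational_Algebra.Polynomial"
begin

record ('k, 'a) kalg =
  kcarrier :: "'a set"
  kzero :: 'a
  kone :: 'a
  kplus :: "'a \<Rightarrow> 'a \<Rightarrow> 'a"
  ktimes :: "'a \<Rightarrow> 'a \<Rightarrow> 'a"
  ksmult :: "'k \<Rightarrow> 'a \<Rightarrow> 'a"

definition comm_kalg :: "('k::comm_ring_1, 'a) kalg \<Rightarrow> bool" where
  "comm_kalg A \<longleftrightarrow>
     kzero A \<in> kcarrier A \<and> kone A \<in> kcarrier A \<and>
     (\<forall>x\<in>kcarrier A. \<forall>y\<in>kcarrier A. kplus A x y \<in> kcarrier A \<and> ktimes A x y \<in> kcarrier A) \<and>
     (\<forall>c x. x \<in> kcarrier A \<longrightarrow> ksmult A c x \<in> kcarrier A) \<and>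
     (\<forall>x\<in>kcarrier A. \<forall>y\<in>kcarrier A. \<forall>z\<in>kcarrier A.
        kplus A (kplus A x y) z = kplus A x (kplus A y z) \<and>
        ktimes A (ktimes A x y) z = ktimes A x (ktimes A y z) \<and>
        ktimes A x (kplus A y z) = kplus A (ktimes A x y) (ktimes A x z)) \<and>
     (\<forall>x\<in>kcarrier A. \<forall>y\<in>kcarrier A.
        kplus A x y = kplus A y x \<and> ktimes A x y = ktimes A y x) \<and>
     (\<forall>x\<in>kcarrier A. kplus A (kzero A) x = x \<and> ktimes A (kone A) x = x \<and>
        (\<exists>y\<in>kcarrier A. kplus A x y = kzero A)) \<and>
     (\<forall>c d. \<forall>x\<in>kcarrier A. \<forall>y\<in>kcarrier A.
        ksmult A c (kplus A x y) = kplus A (ksmult A c x) (ksmult A c y) \<and>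
        ksmult A (c + d) x = kplus A (ksmult A c x) (ksmult A d x) \<and>
        ksmult A (c * d) x = ksmult A c (ksmult A d x) \<and>
        ksmult A 1 x = x \<and>
        ksmult A c (ktimes A x y) = ktimes A (ksmult A c x) y)"

definition rota_baxter0 :: "('k, 'a) kalg \<Rightarrow> ('a \<Rightarrow> 'a) \<Rightarrow> bool" where
  "rota_baxter0 A P \<longleftrightarrow>
     (\<forall>x\<in>kcarrier A. P x \<in> kcarrier A) \<and>
     (\<forall>x\<in>kcarrier A. \<forall>y\<in>kcarrier A. P (kplus A x y) = kplus A (P x) (P y)) \<and>
     (\<forall>c. \<forall>x\<in>kcarrier A. P (ksmult A c x) = ksmult A c (P x)) \<and>
     (\<forall>x\<in>kcarrier A. \<forall>y\<in>kcarrier A.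
        ktimes A (P x) (P y) = kplus A (P (ktimes A (P x) y)) (P (ktimes A x (P y))))"

primrec asum :: "('k, 'a) kalg \<Rightarrow> (nat \<Rightarrow> 'a) \<Rightarrow> nat \<Rightarrow> 'a" where
  "asum A g 0 = kzero A"
| "asum A g (Suc n) = kplus A (asum A g n) (g n)"

definition hurwitz :: "('k::comm_ring_1, 'a) kalg \<Rightarrow> ('k, nat \<Rightarrow> 'a) kalg" where
  "hurwitz A = \<lparr> kcarrier = {f. \<forall>n. f n \<in> kcarrier A},
     kzero = (\<lambda>n. kzero A),
     kone = (\<lambda>n. if n = 0 then kone A else kzero A),
     kplus = (\<lambda>f g n. kplus A (f n) (g n)),
     ktimes = (\<lambda>f g n. asum A (\<lambda>j. ksmult A (of_nat (n choose j)) (ktimes A (f (n - j)) (g j))) (Suc n)),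
     ksmult = (\<lambda>c f n. ksmult A c (f n)) \<rparr>"

fun cover_n :: "('k::comm_ring_1, 'a) kalg \<Rightarrow> 'k poly \<Rightarrow> 'k poly \<Rightarrow> ('a \<Rightarrow> 'a) \<Rightarrow> nat \<Rightarrow> (nat \<Rightarrow> 'a) \<Rightarrow> 'a" where
  "cover_n A phi psi P 0 f = P (f 0)"
| "cover_n A phi psi P (Suc n) f =
     kplus A (asum A (\<lambda>i. ksmult A (coeff phi i) (f (n + i))) (Suc (degree phi)))
             (asum A (\<lambda>j. ksmult A (coeff psi j) (cover_n A phi psi P n (\<lambda>m. f (m + j)))) (Suc (degree psi)))"

definition omega_cover :: "('k::comm_ring_1, 'a) kalg \<Rightarrow> 'k poly \<Rightarrow> 'k poly \<Rightarrow> ('a \<Rightarrow> 'a) \<Rightarrow> (nat \<Rightarrow> 'a) \<Rightarrow> (nat \<Rightarrow> 'a)" where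
  "omega_cover A phi psi P f = (\<lambda>n. cover_n A phi psi P n f)"

end

theory Submission
  imports Defs
begin


lemma asum_pw:
  assumes "kzero A = (\<lambda>m. 0)" "kplus A = (\<lambda>x y m. x m + y m)"
  shows "asum A g n m = (\<Sum>i<n. g i m)"
  by (induction n) (simp_all add: assms)

definition A1 :: "('k::comm_ring_1, nat \<Rightarrow> 'k) kalg" where
  "A1 = \<lparr>kcarrier = UNIV, kzero = (\<lambda>n. 0), kone = (\<lambda>n. 1),
     kplus = (\<lambda>x y n. x n + y n), ktimes = (\<lambda>x y n. x n * y n),
     ksmult = (\<lambda>c x n. c * x n)\<rparr>"

lemma A1_comm: "comm_kalg (A1 :: ('k::comm_ring_1, nat \<Rightarrow> 'k) kalg)"
  unfolding comm_kalg_def A1_def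
  apply (simp add: fun_eq_iff algebra_simps)
  apply (intro allI impI)
  apply (rule_tac x="\<lambda>n. - x n" in exI)
  apply simp
  done

lemma A1_rb: "rota_baxter0 (A1 :: ('k::comm_ring_1, nat \<Rightarrow> 'k) kalg) (\<lambda>x n. 0)"
  unfolding rota_baxter0_def A1_def by (simp add: fun_eq_iff)

definition mul3 :: "(nat \<Rightarrow> 'k::comm_ring_1) \<Rightarrow> (nat \<Rightarrow> 'k) \<Rightarrow> nat \<Rightarrow> 'k" where
  "mul3 x y n = (if n = 0 then x 0 * y 0 else if n = 1 then x 0 * y 1 + x 1 * y 0
     else if n = 2 then x 0 * y 2 + 2 * x 1 * y 1 + x 2 * y 0 else 0)"

definition P3 :: "(nat \<Rightarrow> 'k::comm_ring_1) \<Rightarrow> nat \<Rightarrow> 'k" where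
  "P3 x n = (if n = 1 then x 0 else if n = 2 then x 1 else 0)"

definition A3 :: "('k::comm_ring_1, nat \<Rightarrow> 'k) kalg" where
  "A3 = \<lparr>kcarrier = {x. \<forall>n\<ge>3. x n = 0}, kzero = (\<lambda>n. 0), kone = (\<lambda>n. if n = 0 then 1 else 0),
     kplus = (\<lambda>x y n. x n + y n), ktimes = mul3,
     ksmult = (\<lambda>c x n. c * x n)\<rparr>"

lemma A3_comm: "comm_kalg (A3 :: ('k::comm_ring_1, nat \<Rightarrow> 'k) kalg)"
  unfolding comm_kalg_def A3_def
  apply (simp add: fun_eq_iff algebra_simps mul3_def)
  apply (intro allI impI)
  apply (rule_tac x="\<lambda>n. - x n" in exI)
  apply simp
  done

lemma A3_rb: "rota_baxter0 (A3 :: ('k::comm_ring_1, nat \<Rightarrow> 'k) kalg) P3"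
  unfolding rota_baxter0_def A3_def by (auto simp add: fun_eq_iff P3_def mul3_def algebra_simps)




lemma A1_sel[simp]: "kzero A1 = (\<lambda>n. 0)" "kone A1 = (\<lambda>n. 1)" "kplus A1 = (\<lambda>x y n. x n + y n)"
  "ktimes A1 = (\<lambda>x y n. x n * y n)" "ksmult A1 = (\<lambda>c x n. c * x n)" "kcarrier A1 = UNIV"
  by (simp_all add: A1_def)

lemma asum_A1[simp]: "asum A1 g n m = (\<Sum>i<n. g i m)"
  by (rule asum_pw) simp_all

lemma cov1_A1: "cover_n A1 phi psi (\<lambda>x n. 0) 1 G m = (\<Sum>i<Suc (degree phi). coeff phi i * G i m)"
  by (simp add: numeral_eq_Suc)

lemma cov2_A1: "cover_n A1 phi psi (\<lambda>x n. 0) 2 G m = (\<Sum>i<Suc (degree phi). coeff phi i * G (1+i) m)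
   + (\<Sum>j<Suc (degree psi). coeff psi j * (\<Sum>i<Suc (degree phi). coeff phi i * G (i + j) m))"
  by (simp add: numeral_eq_Suc add.commute)

lemma caseA:
  fixes phi psi :: "'k::{idom, ring_char_0} poly"
  assumes "phi \<noteq> 0" and d: "degree psi = 1" and c1: "coeff psi 1 = 1"
  shows "\<not> rota_baxter0 (hurwitz A1) (omega_cover A1 phi psi (\<lambda>x n. 0))"
proof
  assume rb: "rota_baxter0 (hurwitz A1) (omega_cover A1 phi psi (\<lambda>x n. 0))"
  define r where "r = degree phi"
  define a where "a = coeff phi r"
  have a0: "a \<noteq> 0" using assms(1) by (simp add: a_def r_def)
  define F :: "nat \<Rightarrow> nat \<Rightarrow> 'k" where "F = (\<lambda>k n. if k = r then 1 else 0)"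
  define X where "X = omega_cover A1 phi psi (\<lambda>x n. 0) F"
  have X0: "X 0 m = 0" for m by (simp add: X_def omega_cover_def)
  have X1: "X 1 m = a" for m
  proof -
    have "X 1 m = (\<Sum>i<Suc r. coeff phi i * F i m)"
      unfolding X_def omega_cover_def r_def by (rule cov1_A1)
    also have "\<dots> = (\<Sum>i<Suc r. if i = r then a else 0)"
      by (rule sum.cong) (auto simp: F_def a_def)
    finally show ?thesis by simp
  qed
  have X1s: "X (Suc 0) m = a" for m using X1 by simp
  have Fc: "F \<in> kcarrier (hurwitz A1)" by (simp add: hurwitz_def)
  have eq: "ktimes (hurwitz A1) X X =
     kplus (hurwitz A1) (omega_cover A1 phi psi (\<lambda>x n. 0) (ktimes (hurwitz A1) X F))
        (omega_cover A1 phi psi (\<lambda>x n. 0) (ktimes (hurwitz A1) F X))"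
    unfolding X_def using conjunct2[OF conjunct2[OF conjunct2[OF rb[unfolded rota_baxter0_def]]], rule_format, OF Fc Fc] .
  define H where "H = ktimes (hurwitz A1) X F"
  define K where "K = ktimes (hurwitz A1) F X"
  have Hv: "H k m = (if k = Suc r then of_nat (Suc r) * a else 0)" if "k \<le> Suc r" for k m
  proof -
    have "H k m = (\<Sum>j<Suc k. of_nat (k choose j) * (X (k - j) m * F j m))"
      by (simp add: H_def hurwitz_def)
    also have "\<dots> = (\<Sum>j<Suc k. if j = r then of_nat (k choose r) * X (k - r) m else 0)"
      by (rule sum.cong) (auto simp: F_def)
    also have "\<dots> = (if r < Suc k then of_nat (k choose r) * X (k - r) m else 0)"
      by simp
    also have "\<dots> = (if k = Suc r then of_nat (Suc r) * a else 0)"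
      using that by (cases "k = Suc r") (auto simp: X1s X1 X0 intro!: X0)
    finally show ?thesis .
  qed
  have Kv: "K k m = (if k = Suc r then of_nat (Suc r) * a else 0)" if "k \<le> Suc r" for k m
  proof -
    have "K k m = (\<Sum>j<Suc k. of_nat (k choose j) * (F (k - j) m * X j m))"
      by (simp add: K_def hurwitz_def)
    also have "\<dots> = (\<Sum>j<Suc k. if j = k - r \<and> r \<le> k then of_nat (k choose j) * X j m else 0)"
      by (rule sum.cong) (auto simp: F_def)
    also have "\<dots> = (if k = Suc r then of_nat (Suc r) * a else 0)"
    proof (cases "r \<le> k")
      case True
      then have "(\<Sum>j<Suc k. if j = k - r \<and> r \<le> k then of_nat (k choose j) * X j m else 0)
          = of_nat (k choose (k - r)) * X (k - r) m"
        by (simp add: sum.delta')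
      then show ?thesis using True that
        by (cases "k = Suc r") (auto simp: X1s X1 X0 le_Suc_eq)
    qed simp
    finally show ?thesis .
  qed
  have L: "ktimes (hurwitz A1) X X 2 0 = 2 * a * a"
    by (simp add: hurwitz_def numeral_eq_Suc X0 X1s)
  have Rsum: "(\<Sum>i<Suc r. coeff phi i * G (1+i) 0) = a * (of_nat (Suc r) * a)"
     "(\<Sum>i<Suc r. coeff phi i * G (i+0) 0) = 0"
     "(\<Sum>i<Suc r. coeff phi i * G (i+1) 0) = a * (of_nat (Suc r) * a)"
    if "\<And>k m. k \<le> Suc r \<Longrightarrow> G k m = (if k = Suc r then of_nat (Suc r) * a else 0)" for G
  proof -
    show "(\<Sum>i<Suc r. coeff phi i * G (1+i) 0) = a * (of_nat (Suc r) * a)"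
      by (subst sum.cong[OF refl, of _ _ "\<lambda>i. if i = r then a * (of_nat (Suc r) * a) else 0"])
         (auto simp: that a_def)
    show "(\<Sum>i<Suc r. coeff phi i * G (i+0) 0) = 0"
      by (rule sum.neutral) (auto simp: that)
    show "(\<Sum>i<Suc r. coeff phi i * G (i+1) 0) = a * (of_nat (Suc r) * a)"
      by (subst sum.cong[OF refl, of _ _ "\<lambda>i. if i = r then a * (of_nat (Suc r) * a) else 0"])
         (auto simp: that a_def)
  qed
  have cov2': "cover_n A1 phi psi (\<lambda>x n. 0) 2 G 0 = (\<Sum>i<Suc r. coeff phi i * G (1+i) 0)
     + (coeff psi 0 * (\<Sum>i<Suc r. coeff phi i * G (i + 0) 0) + (\<Sum>i<Suc r. coeff phi i * G (i + 1) 0))" for G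
    using cov2_A1[of phi psi G 0] d c1 by (simp add: r_def)
  have RH: "cover_n A1 phi psi (\<lambda>x n. 0) 2 H 0 = 2 * (a * (of_nat (Suc r) * a))"
  proof -
    have "cover_n A1 phi psi (\<lambda>x n. 0) 2 H 0 = a * (of_nat (Suc r) * a) + (coeff psi 0 * 0 + a * (of_nat (Suc r) * a))"
      by (subst cov2') (simp only: Rsum(1)[of H, OF Hv] Rsum(2)[of H, OF Hv] Rsum(3)[of H, OF Hv])
    then show ?thesis by simp
  qed
  have RK: "cover_n A1 phi psi (\<lambda>x n. 0) 2 K 0 = 2 * (a * (of_nat (Suc r) * a))"
  proof -
    have "cover_n A1 phi psi (\<lambda>x n. 0) 2 K 0 = a * (of_nat (Suc r) * a) + (coeff psi 0 * 0 + a * (of_nat (Suc r) * a))"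
      by (subst cov2') (simp only: Rsum(1)[of K, OF Kv] Rsum(2)[of K, OF Kv] Rsum(3)[of K, OF Kv])
    then show ?thesis by simp
  qed
  have "2 * a * a = 2 * (a * (of_nat (Suc r) * a)) + 2 * (a * (of_nat (Suc r) * a))"
    using fun_cong[OF fun_cong[OF eq, of 2], of 0] L RH RK
    by (simp add: hurwitz_def omega_cover_def H_def K_def)
  then have "a * a * (of_nat (4 * r + 2)) = 0"
    by (simp add: algebra_simps)
  then have "a * a = 0 \<or> (of_nat (4 * r + 2) :: 'k) = 0" by (simp only: mult_eq_0_iff)
  then have "(of_nat (4 * r + 2) :: 'k) = 0" using a0 by (simp only: mult_eq_0_iff) blast
  then show False by (simp only: of_nat_eq_0_iff)
qed



lemma A3_sel[simp]: "kzero A3 = (\<lambda>n. 0)" "kone A3 = (\<lambda>n. if n = 0 then 1 else 0)"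
  "kplus A3 = (\<lambda>x y n. x n + y n)"
  "ktimes A3 = mul3" "ksmult A3 = (\<lambda>c x n. c * x n)" "kcarrier A3 = {x. \<forall>n\<ge>3. x n = 0}"
  by (simp_all add: A3_def)

lemma asum_A3[simp]: "asum A3 g n m = (\<Sum>i<n. g i m)"
  by (rule asum_pw) simp_all

definition ExS :: "'k::comm_ring_1 \<Rightarrow> 'k \<Rightarrow> nat \<Rightarrow> nat \<Rightarrow> 'k" where
  "ExS c l = (\<lambda>k n. if n = 0 then c * l ^ k else 0)"

fun qq :: "'k::comm_ring_1 poly \<Rightarrow> 'k poly \<Rightarrow> nat \<Rightarrow> 'k \<Rightarrow> 'k" where
  "qq phi psi 0 l = 0"
| "qq phi psi (Suc n) l = l ^ n * poly phi l + poly psi l * qq phi psi n l"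

lemma ExS_shift: "(\<lambda>m. ExS c l (m + j)) = ExS (c * l ^ j) l"
  by (auto simp: ExS_def fun_eq_iff power_add algebra_simps)

lemma cover3: "cover_n A3 phi psi P3 n (ExS c l) =
   (\<lambda>m. if m = 0 then c * qq phi psi n l else if m = 1 then c * poly psi l ^ n else 0)"
proof (induction n arbitrary: c)
  case 0
  then show ?case by (auto simp: P3_def ExS_def fun_eq_iff)
next
  case (Suc n)
  have e1: "(\<Sum>i<Suc (degree phi). coeff phi i * (c * l ^ (n + i))) = c * (l ^ n * poly phi l)"
    by (simp add: poly_altdef lessThan_Suc_atMost sum_distrib_left power_add algebra_simps)
  have e2: "(\<Sum>j<Suc (degree psi). coeff psi j * (c * l ^ j * x)) = c * (poly psi l * x)" for x
    by (simp add: poly_altdef lessThan_Suc_atMost sum_distrib_left sum_distrib_right algebra_simps)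
  show ?case
  proof (rule ext)
    fix m
    have "cover_n A3 phi psi P3 (Suc n) (ExS c l) m =
      (\<Sum>i<Suc (degree phi). coeff phi i * ExS c l (n + i) m) +
      (\<Sum>j<Suc (degree psi). coeff psi j * cover_n A3 phi psi P3 n (ExS (c * l ^ j) l) m)"
      by (simp add: ExS_shift del: sum.lessThan_Suc asum.simps)
    also have "\<dots> = (if m = 0 then c * qq phi psi (Suc n) l else if m = 1 then c * poly psi l ^ Suc n else 0)"
    proof -
      consider "m = 0" | "m = 1" | "m \<noteq> 0 \<and> m \<noteq> 1" by blast
      then show ?thesis
      proof cases
        case 1
        have s1: "(\<Sum>i<Suc (degree phi). coeff phi i * ExS c l (n + i) m) = (\<Sum>i<Suc (degree phi). coeff phi i * (c * l ^ (n + i)))"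
          by (simp add: ExS_def 1 del: sum.lessThan_Suc)
        have s2: "(\<Sum>j<Suc (degree psi). coeff psi j * cover_n A3 phi psi P3 n (ExS (c * l ^ j) l) m)
            = (\<Sum>j<Suc (degree psi). coeff psi j * (c * l ^ j * qq phi psi n l))"
          by (simp only: Suc.IH 1 if_True simp_thms)
        show ?thesis unfolding s1 s2 e1 e2 using 1 by (simp add: algebra_simps)
      next
        case 2
        have s1: "(\<Sum>i<Suc (degree phi). coeff phi i * ExS c l (n + i) m) = 0"
          by (simp add: ExS_def 2 del: sum.lessThan_Suc)
        have s2: "(\<Sum>j<Suc (degree psi). coeff psi j * cover_n A3 phi psi P3 n (ExS (c * l ^ j) l) m)
            = (\<Sum>j<Suc (degree psi). coeff psi j * (c * l ^ j * poly psi l ^ n))"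
          by (simp add: Suc.IH 2 del: sum.lessThan_Suc)
        show ?thesis unfolding s1 s2 e2 using 2 by (simp add: algebra_simps)
      next
        case 3
        have s1: "(\<Sum>i<Suc (degree phi). coeff phi i * ExS c l (n + i) m) = 0"
          using 3 by (simp add: ExS_def del: sum.lessThan_Suc)
        have s2: "(\<Sum>j<Suc (degree psi). coeff psi j * cover_n A3 phi psi P3 n (ExS (c * l ^ j) l) m) = 0"
          using 3 by (simp add: Suc.IH del: sum.lessThan_Suc)
        show ?thesis unfolding s1 s2 using 3 by simp
      qed
    qed
    finally show "cover_n A3 phi psi P3 (Suc n) (ExS c l) m = (if m = 0 then c * qq phi psi (Suc n) l else if m = 1 then c * poly psi l ^ Suc n else 0)" .
  qed
qed




lemma binom_sum: "(\<Sum>i<Suc j. of_nat (j choose i) * (x ^ (j - i) * y ^ i)) = (y + x :: 'k::comm_ring_1) ^ j"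
  unfolding binomial_ring lessThan_Suc_atMost by (rule sum.cong) (simp_all add: mult_ac)

lemma Hcomp:
  fixes X G :: "nat \<Rightarrow> nat \<Rightarrow> 'k::comm_ring_1"
  assumes X: "\<And>k. X k 2 = 0" and G1: "\<And>k. G k (Suc 0) = 0" and G2: "\<And>k. G k 2 = 0"
  shows "ktimes (hurwitz A3) X G j 2 = 0"
    "ktimes (hurwitz A3) X G j 1 = (\<Sum>i<Suc j. of_nat (j choose i) * (X (j - i) 1 * G i 0))"
  by (simp_all add: hurwitz_def mul3_def X G1 G2 del: sum.lessThan_Suc asum.simps)

lemma cov1_3: "cover_n A3 phi psi P3 1 H 2 = (\<Sum>i<Suc (degree phi). coeff phi i * H i 2)
    + (\<Sum>j<Suc (degree psi). coeff psi j * H j 1)"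
  by (simp add: P3_def del: sum.lessThan_Suc asum.simps)

lemma caseB:
  fixes phi psi :: "'k::{idom, ring_char_0} poly"
  assumes ne: "2 * poly psi l + 2 * poly psi u \<noteq> poly psi (u + poly psi l) + poly psi (poly psi u + l)"
  shows "\<not> rota_baxter0 (hurwitz A3) (omega_cover A3 phi psi P3)"
proof
  assume rb: "rota_baxter0 (hurwitz A3) (omega_cover A3 phi psi P3)"
  define F where "F = ExS (1::'k) l"
  define G where "G = ExS (1::'k) u"
  define X where "X = omega_cover A3 phi psi P3 F"
  define Y where "Y = omega_cover A3 phi psi P3 G"
  have Xv: "X k = (\<lambda>m. if m = 0 then qq phi psi k l else if m = 1 then poly psi l ^ k else 0)" for k
    unfolding X_def omega_cover_def F_def cover3 by (simp add: fun_eq_iff)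
  have Yv: "Y k = (\<lambda>m. if m = 0 then qq phi psi k u else if m = 1 then poly psi u ^ k else 0)" for k
    unfolding Y_def omega_cover_def G_def cover3 by (simp add: fun_eq_iff)
  have Fc: "F \<in> kcarrier (hurwitz A3)" by (simp add: hurwitz_def F_def ExS_def)
  have Gc: "G \<in> kcarrier (hurwitz A3)" by (simp add: hurwitz_def G_def ExS_def)
  have eq: "ktimes (hurwitz A3) X Y =
     kplus (hurwitz A3) (omega_cover A3 phi psi P3 (ktimes (hurwitz A3) X G))
        (omega_cover A3 phi psi P3 (ktimes (hurwitz A3) F Y))"
    unfolding X_def Y_def using conjunct2[OF conjunct2[OF conjunct2[OF rb[unfolded rota_baxter0_def]]], rule_format, OF Fc Gc] .
  have L: "ktimes (hurwitz A3) X Y 1 2 = 2 * poly psi l + 2 * poly psi u"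
    by (simp add: hurwitz_def mul3_def Xv Yv)
  define H where "H = ktimes (hurwitz A3) X G"
  define K where "K = ktimes (hurwitz A3) F Y"
  have H2: "H j 2 = 0" and H1: "H j 1 = (u + poly psi l) ^ j" for j
  proof -
    have a: "\<And>k. X k 2 = 0" "\<And>k. G k (Suc 0) = 0" "\<And>k. G k 2 = 0" by (simp_all add: Xv G_def ExS_def)
    show "H j 2 = 0" unfolding H_def by (rule Hcomp(1)[of X G, OF a])
    have "H j 1 = (\<Sum>i<Suc j. of_nat (j choose i) * (X (j - i) 1 * G i 0))"
      unfolding H_def by (rule Hcomp(2)[of X G, OF a])
    also have "\<dots> = (\<Sum>i<Suc j. of_nat (j choose i) * (poly psi l ^ (j - i) * u ^ i))"
      by (simp add: Xv G_def ExS_def del: sum.lessThan_Suc)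
    also have "\<dots> = (u + poly psi l) ^ j" by (rule binom_sum)
    finally show "H j 1 = (u + poly psi l) ^ j" .
  qed
  have K2: "K j 2 = 0" and K1: "K j 1 = (poly psi u + l) ^ j" for j
  proof -
    show "K j 2 = 0" unfolding K_def
      by (simp add: hurwitz_def mul3_def Yv F_def ExS_def del: sum.lessThan_Suc asum.simps)
    have "K j 1 = (\<Sum>i<Suc j. of_nat (j choose i) * (l ^ (j - i) * poly psi u ^ i))"
      unfolding K_def by (simp add: hurwitz_def mul3_def Yv F_def ExS_def del: sum.lessThan_Suc asum.simps)
    also have "\<dots> = (poly psi u + l) ^ j" by (rule binom_sum)
    finally show "K j 1 = (poly psi u + l) ^ j" .
  qed
  have pe: "(\<Sum>j<Suc (degree psi). coeff psi j * z ^ j) = poly psi z" for z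
    by (simp add: poly_altdef lessThan_Suc_atMost del: sum.lessThan_Suc)
  have RH: "cover_n A3 phi psi P3 1 H 2 = poly psi (u + poly psi l)"
    unfolding cov1_3 H2 H1 pe by simp
  have RK: "cover_n A3 phi psi P3 1 K 2 = poly psi (poly psi u + l)"
    unfolding cov1_3 K2 K1 pe by simp
  have "2 * poly psi l + 2 * poly psi u = poly psi (u + poly psi l) + poly psi (poly psi u + l)"
    using fun_cong[OF fun_cong[OF eq, of 1], of 2] L RH RK
    by (simp add: hurwitz_def omega_cover_def H_def K_def)
  with ne show False by simp
qed




lemma exists_l:
  fixes psi :: "'k::{idom, ring_char_0} poly"
  assumes nz: "psi \<noteq> 0" and nd: "\<not> (degree psi = 1 \<and> coeff psi 1 = 1)"
  shows "\<exists>l. 2 * poly psi l + 2 * poly psi 0 \<noteq> poly psi (0 + poly psi l) + poly psi (poly psi 0 + l)"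
proof (rule ccontr)
  assume "\<not> ?thesis"
  then have all: "\<And>l. 2 * poly psi l + 2 * poly psi 0 = poly psi (0 + poly psi l) + poly psi (poly psi 0 + l)"
    by blast
  define b0 where "b0 = poly psi 0"
  define Lp where "Lp = smult 2 psi + [:2 * b0:]"
  define Rp where "Rp = pcompose psi psi + pcompose psi [:b0, 1:]"
  have "poly Lp = poly Rp"
  proof
    fix l
    show "poly Lp l = poly Rp l"
      using all[of l] by (simp add: Lp_def Rp_def poly_pcompose b0_def algebra_simps)
  qed
  then have LR: "Lp = Rp" by (simp add: poly_eq_poly_eq_iff)
  consider "degree psi = 0" | "degree psi = 1" | "degree psi \<ge> 2" by linarith
  then show False
  proof cases
    case 1
    then obtain a where pa: "psi = [:a:]" by (metis degree_eq_zeroE)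
    then have a0: "a \<noteq> 0" using nz by simp
    have "coeff Lp 0 = coeff Rp 0" using LR by simp
    then have "4 * a = 2 * a" by (simp add: Lp_def Rp_def pa b0_def)
    then have "2 * a = 0" by (simp add: algebra_simps)
    with a0 show False by simp
  next
    case 2
    define b1 where "b1 = coeff psi 1"
    have b1nz: "b1 \<noteq> 0" using 2 nz unfolding b1_def by (metis leading_coeff_0_iff)
    have b1n1: "b1 \<noteq> 1" using nd 2 b1_def by simp
    have pp: "psi = [:b0, b1:]"
    proof (rule poly_eqI)
      fix n show "coeff psi n = coeff [:b0, b1:] n"
        using 2 by (cases n) (auto simp: b0_def b1_def poly_0_coeff_0 coeff_pCons coeff_eq_0 split: nat.split)
    qed
    have "coeff Lp 1 = coeff Rp 1" using LR by simp
    then have "coeff (smult 2 [:b0, b1:] + [:2 * b0:]) 1 = coeff (pcompose [:b0, b1:] [:b0, b1:] + pcompose [:b0, b1:] [:b0, 1:]) 1"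
      unfolding Lp_def Rp_def using pp by metis
    then have "2 * b1 = b1 * b1 + b1"
      by (simp add: pcompose_pCons algebra_simps)
    then have "b1 * (b1 - 1) = 0" by (simp add: algebra_simps)
    with b1nz b1n1 show False by simp
  next
    case 3
    define s where "s = degree psi"
    have ds: "degree (pcompose psi [:b0, 1:]) = s" by (simp add: degree_pcompose s_def)
    have dss: "degree (pcompose psi psi) = s * s" by (simp add: degree_pcompose s_def)
    have s2: "s \<ge> 2" using 3 s_def by simp
    then have "s * 2 \<le> s * s" by (intro mult_left_mono) simp_all
    then have lt: "s < s * s" using s2 by linarith
    have dR: "degree Rp = s * s" unfolding Rp_def
      by (subst degree_add_eq_left) (simp_all add: ds dss lt)
    have dL: "degree Lp \<le> s" unfolding Lp_def s_def
      using degree_add_le[of "smult 2 psi" "degree psi" "[:2 * b0:]"] degree_smult_le[of 2 psi] by simp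
    from LR dR dL lt show False by simp
  qed
qed


theorem proposition3p7:
  fixes phi psi :: "'k::{idom, ring_char_0} poly"
  assumes "phi \<noteq> 0" and "psi \<noteq> 0"
  shows "\<exists>(A :: ('k, nat \<Rightarrow> 'k) kalg) P.
           comm_kalg A \<and> rota_baxter0 A P \<and>
           \<not> rota_baxter0 (hurwitz A) (omega_cover A phi psi P)"
proof (cases "degree psi = 1 \<and> coeff psi 1 = 1")
  case True
  have "\<not> rota_baxter0 (hurwitz A1) (omega_cover A1 phi psi (\<lambda>x n. 0))"
    using caseA[OF assms(1)] True by blast
  then show ?thesis using A1_comm A1_rb by blast
next
  case False
  obtain l where l: "2 * poly psi l + 2 * poly psi 0 \<noteq> poly psi (0 + poly psi l) + poly psi (poly psi 0 + l)"
    using exists_l[OF assms(2) False] by blast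
  have "\<not> rota_baxter0 (hurwitz A3) (omega_cover A3 phi psi P3)"
    by (rule caseB[OF l])
  then show ?thesis using A3_comm A3_rb by blast
qed

end
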